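(* Let $k\geq 2$ be an even integer and let $G$ be a connected graph of order $n\geq 3$. (i) If $\lambda_1(D(G))\le \lambda_1(D(K_1\vee(K_{n-2}\cup K_1)))$ and $G\not\cong K_1\vee(K_{n-2}\cup K_1)$, then $G$ is $\mathrm{GFC}_k$ when $n$ is odd, and $G$ is $\mathrm{GBC}_k$ when $n$ is even with $n\geq 10$. (ii) If $n$ is even with $4\le n\le 8$ and $\lambda_1(D(G))\le \lambda_1(D(S_{n,\frac{n}{2}}))$, then $G$ is $\mathrm{GBC}_k$ unless $G\cong S_{n,\frac{n}{2}}$.
   Context: All graphs are finite, simple, undirected. For a connected graph $G$, $D(G)$ is its distance matrix (entry $(i,j)$ is the distance between $v_i$ and $v_j$) and $\lambda_1(D(G))$ its largest eigenvalue. $G\cup H$ is disjoint union, $G\vee H$ the join, $tK_1$ the edgeless graph on $t$ vertices, $S_{n,k}=K_k\vee(n-k)K_1$. For a graph $H$, $i(H)$ is the number of isolated vertices of $H$ and $\mathrm{odd}(H)$ the number of components of $H$ with an odd number ($\ge 3$) of vertices. The $k$-Berge–Tutte formula is $\mathrm{def}_k(G)=\max_{S\subseteq V(G)} \big(k\, i(G-S)-k|S|\big)$ if $k$ is even, and $\max_{S\subseteq V(G)}\big(\mathrm{odd}(G-S)+k\, i(G-S)-k|S|\big)$ if $k$ is odd; a set $S$ attaining the maximum is a $k$-barrier. A connected graph of odd order is $\mathrm{GFC}_k$ if it has no non-empty $k$-barrier; a connected graph of even order is $\mathrm{GBC}_k$ if it has no non-empty $k$-barrier. *)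

theory Defs
  imports Complex_Main "Jordan_Normal_Form.Char_Poly"
begin

definition graph :: "nat \<Rightarrow> (nat \<Rightarrow> nat \<Rightarrow> bool) \<Rightarrow> bool" where
  "graph n adj \<longleftrightarrow> (\<forall>u v. adj u v \<longrightarrow> u < n \<and> v < n \<and> u \<noteq> v \<and> adj v u)"

fun walk_in :: "(nat \<Rightarrow> nat \<Rightarrow> bool) \<Rightarrow> nat set \<Rightarrow> nat list \<Rightarrow> bool" where
  "walk_in adj W [] = False"
| "walk_in adj W [x] = (x \<in> W)"
| "walk_in adj W (x # y # xs) = (x \<in> W \<and> adj x y \<and> walk_in adj W (y # xs))"

definition reach_in :: "(nat \<Rightarrow> nat \<Rightarrow> bool) \<Rightarrow> nat set \<Rightarrow> nat \<Rightarrow> nat \<Rightarrow> bool" where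
  "reach_in adj W u v \<longleftrightarrow> (\<exists>xs. walk_in adj W xs \<and> hd xs = u \<and> last xs = v)"

definition connected_graph :: "nat \<Rightarrow> (nat \<Rightarrow> nat \<Rightarrow> bool) \<Rightarrow> bool" where
  "connected_graph n adj \<longleftrightarrow> graph n adj \<and> n \<ge> 1 \<and>
     (\<forall>u < n. \<forall>v < n. reach_in adj {0..<n} u v)"

definition gdist :: "nat \<Rightarrow> (nat \<Rightarrow> nat \<Rightarrow> bool) \<Rightarrow> nat \<Rightarrow> nat \<Rightarrow> nat" where
  "gdist n adj u v = (LEAST m. \<exists>xs. walk_in adj {0..<n} xs \<and> hd xs = u \<and> last xs = v
                                  \<and> length xs = Suc m)"

definition dist_matrix :: "nat \<Rightarrow> (nat \<Rightarrow> nat \<Rightarrow> bool) \<Rightarrow> real mat" where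
  "dist_matrix n adj = mat n n (\<lambda>(i, j). real (gdist n adj i j))"

text \<open>Largest eigenvalue (the distance matrix is real symmetric, so all eigenvalues are real).\<close>
definition lambda1 :: "real mat \<Rightarrow> real" where
  "lambda1 A = Max {x. eigenvalue A x}"

definition dist_spectral_radius :: "nat \<Rightarrow> (nat \<Rightarrow> nat \<Rightarrow> bool) \<Rightarrow> real" where
  "dist_spectral_radius n adj = lambda1 (dist_matrix n adj)"

definition graph_iso :: "nat \<Rightarrow> (nat \<Rightarrow> nat \<Rightarrow> bool) \<Rightarrow> (nat \<Rightarrow> nat \<Rightarrow> bool) \<Rightarrow> bool" where
  "graph_iso n adj adj' \<longleftrightarrow> (\<exists>f. bij_betw f {0..<n} {0..<n} \<and>
      (\<forall>u < n. \<forall>v < n. adj u v \<longleftrightarrow> adj' (f u) (f v)))"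

text \<open>K_1 \<or> (K_{n-2} \<union> K_1): vertex 0 is the K_1 joined to everything,
  vertices 1..n-2 form the K_{n-2}, vertex n-1 is the isolated K_1 of the union.\<close>
definition K1_join_Kn2_K1 :: "nat \<Rightarrow> nat \<Rightarrow> nat \<Rightarrow> bool" where
  "K1_join_Kn2_K1 n u v \<longleftrightarrow> u < n \<and> v < n \<and> u \<noteq> v \<and>
     (u = 0 \<or> v = 0 \<or> (u < n - 1 \<and> v < n - 1))"

text \<open>S_{n,k} = K_k \<or> (n-k)K_1: vertices 0..k-1 form the K_k.\<close>
definition S_graph :: "nat \<Rightarrow> nat \<Rightarrow> nat \<Rightarrow> nat \<Rightarrow> bool" where
  "S_graph n k u v \<longleftrightarrow> u < n \<and> v < n \<and> u \<noteq> v \<and> (u < k \<or> v < k)"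

definition isolated_count :: "nat \<Rightarrow> (nat \<Rightarrow> nat \<Rightarrow> bool) \<Rightarrow> nat set \<Rightarrow> nat" where
  "isolated_count n adj S = card {v \<in> {0..<n} - S. \<forall>u \<in> {0..<n} - S. \<not> adj v u}"

definition components :: "nat \<Rightarrow> (nat \<Rightarrow> nat \<Rightarrow> bool) \<Rightarrow> nat set \<Rightarrow> nat set set" where
  "components n adj S = (\<lambda>v. {u. reach_in adj ({0..<n} - S) v u}) ` ({0..<n} - S)"

definition odd_count :: "nat \<Rightarrow> (nat \<Rightarrow> nat \<Rightarrow> bool) \<Rightarrow> nat set \<Rightarrow> nat" where
  "odd_count n adj S = card {C \<in> components n adj S. odd (card C) \<and> card C \<ge> 3}"

definition bt_value :: "nat \<Rightarrow> nat \<Rightarrow> (nat \<Rightarrow> nat \<Rightarrow> bool) \<Rightarrow> nat set \<Rightarrow> int" where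
  "bt_value k n adj S =
     (if even k then int k * int (isolated_count n adj S) - int k * int (card S)
      else int (odd_count n adj S) + int k * int (isolated_count n adj S) - int k * int (card S))"

definition def_k :: "nat \<Rightarrow> nat \<Rightarrow> (nat \<Rightarrow> nat \<Rightarrow> bool) \<Rightarrow> int" where
  "def_k k n adj = Max (bt_value k n adj ` Pow {0..<n})"

definition k_barrier :: "nat \<Rightarrow> nat \<Rightarrow> (nat \<Rightarrow> nat \<Rightarrow> bool) \<Rightarrow> nat set \<Rightarrow> bool" where
  "k_barrier k n adj S \<longleftrightarrow> S \<subseteq> {0..<n} \<and> bt_value k n adj S = def_k k n adj"

definition GFC :: "nat \<Rightarrow> nat \<Rightarrow> (nat \<Rightarrow> nat \<Rightarrow> bool) \<Rightarrow> bool" where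
  "GFC k n adj \<longleftrightarrow> connected_graph n adj \<and> odd n \<and> \<not> (\<exists>S. S \<noteq> {} \<and> k_barrier k n adj S)"

definition GBC :: "nat \<Rightarrow> nat \<Rightarrow> (nat \<Rightarrow> nat \<Rightarrow> bool) \<Rightarrow> bool" where
  "GBC k n adj \<longleftrightarrow> connected_graph n adj \<and> even n \<and> \<not> (\<exists>S. S \<noteq> {} \<and> k_barrier k n adj S)"

end

theory Submission
  imports Defs "Jordan_Normal_Form.Spectral_Radius" "HOL-Analysis.Function_Topology"
begin

definition mv :: "nat \<Rightarrow> (nat \<Rightarrow> nat \<Rightarrow> real) \<Rightarrow> (nat \<Rightarrow> real) \<Rightarrow> nat \<Rightarrow> real" where
  "mv n M f i = (\<Sum>j<n. M i j * f j)"
definition bf :: "nat \<Rightarrow> (nat \<Rightarrow> nat \<Rightarrow> real) \<Rightarrow> (nat \<Rightarrow> real) \<Rightarrow> (nat \<Rightarrow> real) \<Rightarrow> real" where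
  "bf n M f g = (\<Sum>i<n. \<Sum>j<n. f i * M i j * g j)"
definition nf :: "nat \<Rightarrow> (nat \<Rightarrow> real) \<Rightarrow> real" where
  "nf n f = (\<Sum>i<n. (f i)^2)"
definition ip :: "nat \<Rightarrow> (nat \<Rightarrow> real) \<Rightarrow> (nat \<Rightarrow> real) \<Rightarrow> real" where
  "ip n f g = (\<Sum>i<n. f i * g i)"

definition symm :: "nat \<Rightarrow> (nat \<Rightarrow> nat \<Rightarrow> real) \<Rightarrow> bool" where
  "symm n M \<longleftrightarrow> (\<forall>i<n. \<forall>j<n. M i j = M j i)"

lemma bf_mv: "bf n M g f = (\<Sum>i<n. g i * mv n M f i)"
  unfolding bf_def mv_def by (simp add: sum_distrib_left mult.assoc)

lemma bf_sym: assumes "symm n M" shows "bf n M f g = bf n M g f"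
proof -
  have "bf n M f g = (\<Sum>j<n. \<Sum>i<n. f i * M i j * g j)" unfolding bf_def by (rule sum.swap)
  also have "\<dots> = bf n M g f" unfolding bf_def
    by (intro sum.cong refl) (use assms in \<open>auto simp: symm_def\<close>)
  finally show ?thesis .
qed

lemma bf_add: "bf n M (\<lambda>i. f i + t * g i) (\<lambda>i. f i + t * g i)
   = bf n M f f + t * bf n M f g + t * bf n M g f + t^2 * bf n M g g"
  unfolding bf_def
  by (simp add: algebra_simps power2_eq_square sum.distrib sum_distrib_left)

lemma nf_add: "nf n (\<lambda>i. f i + t * g i) = nf n f + 2 * t * ip n g f + t^2 * nf n g"
  unfolding nf_def ip_def
  by (simp add: algebra_simps power2_eq_square sum.distrib sum_distrib_left)

lemma nf_nonneg: "nf n f \<ge> 0" unfolding nf_def by (simp add: sum_nonneg)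

lemma nf_zero: "nf n f = 0 \<Longrightarrow> i < n \<Longrightarrow> f i = 0"
  unfolding nf_def using sum_nonneg_eq_0_iff[of "{..<n}" "\<lambda>i. (f i)^2"] by auto

lemma kernel_lemma:
  assumes sym: "symm n M" and bound: "\<And>f. bf n M f f \<le> \<mu> * nf n f"
    and eq: "bf n M f0 f0 = \<mu> * nf n f0"
  shows "\<And>i. i < n \<Longrightarrow> mv n M f0 i = \<mu> * f0 i"
proof -
  define h where "h i = mv n M f0 i - \<mu> * f0 i" for i
  define C where "C = \<mu> * nf n h - bf n M h h"
  have C0: "C \<ge> 0" using bound[of h] unfolding C_def by simp
  have X: "bf n M h f0 - \<mu> * ip n h f0 = nf n h"
    unfolding bf_mv ip_def nf_def h_def by (simp add: sum_distrib_left power2_eq_square algebra_simps sum_subtractf)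
  have key: "2 * t * nf n h \<le> t^2 * C" for t
  proof -
    have "bf n M (\<lambda>i. f0 i + t * h i) (\<lambda>i. f0 i + t * h i) \<le> \<mu> * nf n (\<lambda>i. f0 i + t * h i)"
      by (rule bound)
    then have "bf n M f0 f0 + 2 * t * bf n M h f0 + t^2 * bf n M h h
       \<le> \<mu> * (nf n f0 + 2 * t * ip n h f0 + t^2 * nf n h)"
      unfolding bf_add nf_add using bf_sym[OF sym, of f0 h] by (simp add: algebra_simps)
    then have "2 * t * (bf n M h f0 - \<mu> * ip n h f0) \<le> t^2 * C"
      unfolding C_def using eq by (simp add: algebra_simps)
    then show ?thesis using X by simp
  qed
  have "nf n h = 0"
  proof (rule ccontr)
    assume "nf n h \<noteq> 0"
    then have X0: "nf n h > 0" using nf_nonneg[of n h] by simp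
    define t where "t = nf n h / (C + 1)"
    have t0: "t > 0" unfolding t_def using X0 C0 by simp
    have "2 * t * nf n h \<le> t^2 * C" by (rule key)
    then have "2 * nf n h \<le> t * C" using t0 by (simp add: power2_eq_square mult.assoc)
    also have "t * C < nf n h" unfolding t_def using X0 C0
      by (simp add: field_simps)
    finally show False using X0 by simp
  qed
  then show "\<And>i. i < n \<Longrightarrow> mv n M f0 i = \<mu> * f0 i"
    using nf_zero unfolding h_def by fastforce
qed


lemma cont_coord: "continuous_on UNIV (\<lambda>x::nat\<Rightarrow>real. x i)"
  by simp

lemma cont_bf: "continuous_on UNIV (\<lambda>f. bf n M f f)"
  unfolding bf_def
  by (intro continuous_on_sum continuous_on_mult continuous_on_const cont_coord)

lemma cont_nf: "continuous_on UNIV (\<lambda>f. nf n f)"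
  unfolding nf_def
  by (intro continuous_on_sum continuous_on_power cont_coord)

lemma bf_scale: "bf n M (\<lambda>i. c * f i) (\<lambda>i. c * f i) = c^2 * bf n M f f"
  unfolding bf_def by (simp add: sum_distrib_left power2_eq_square algebra_simps)
lemma nf_scale: "nf n (\<lambda>i. c * f i) = c^2 * nf n f"
  unfolding nf_def by (simp add: sum_distrib_left power2_eq_square algebra_simps)

lemma bf_cong: "(\<And>i. i < n \<Longrightarrow> f i = g i) \<Longrightarrow> bf n M f f = bf n M g g"
  unfolding bf_def by (intro sum.cong refl) auto
lemma nf_cong: "(\<And>i. i < n \<Longrightarrow> f i = g i) \<Longrightarrow> nf n f = nf n g"
  unfolding nf_def by (intro sum.cong refl) auto

lemma max_exists:
  assumes "n \<ge> 1"
  shows "\<exists>f0. nf n f0 = 1 \<and> (\<forall>f. bf n M f f \<le> bf n M f0 f0 * nf n f)"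
proof -
  define B where "B i = (if i < n then {-1..1} else {0::real})" for i
  define K where "K = (PiE UNIV B) \<inter> {f. nf n f = 1}"
  have "compactin (product_topology (\<lambda>i. euclidean) UNIV) (PiE UNIV B)"
    unfolding compactin_PiE B_def by (auto simp: compactin_euclidean_iff)
  then have c1: "compact (PiE UNIV B)"
    by (simp add: euclidean_product_topology compactin_euclidean_iff)
  have c2: "closed {f. nf n f = 1}"
    by (rule closed_Collect_eq[OF cont_nf continuous_on_const])
  have cK: "compact K" unfolding K_def using c1 c2 by (rule compact_Int_closed)
  define e where "e (i::nat) = (if i = 0 then 1 else 0::real)" for i
  have "nf n e = (\<Sum>i<n. if i = 0 then 1 else 0)" unfolding nf_def e_def
    by (intro sum.cong refl) auto
  then have "nf n e = 1" using assms by simp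
  moreover have "e \<in> PiE UNIV B" unfolding B_def e_def using assms by auto
  ultimately have "K \<noteq> {}" unfolding K_def by auto
  from continuous_attains_sup[OF cK this continuous_on_subset[OF cont_bf[of n M]]]
  obtain f0 where f0: "f0 \<in> K" and mx: "\<And>g. g \<in> K \<Longrightarrow> bf n M g g \<le> bf n M f0 f0" by auto
  have nf0: "nf n f0 = 1" using f0 unfolding K_def by auto
  have "bf n M f f \<le> bf n M f0 f0 * nf n f" for f
  proof (cases "nf n f = 0")
    case True
    then have "bf n M f f = bf n M (\<lambda>_. 0) (\<lambda>_. 0)" using nf_zero by (intro bf_cong) auto
    then show ?thesis using True by (simp add: bf_def)
  next
    case False
    then have p: "nf n f > 0" using nf_nonneg[of n f] by simp
    define c where "c = 1 / sqrt (nf n f)"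
    define g where "g i = (if i < n then c * f i else 0)" for i
    have c2: "c^2 = 1 / nf n f" unfolding c_def using p by (simp add: power_divide)
    have ng: "nf n g = 1" 
      using nf_cong[of n g "\<lambda>i. c * f i"] nf_scale[of n c f] c2 p unfolding g_def by simp
    have "g \<in> PiE UNIV B"
    proof -
      have "\<bar>g i\<bar> \<le> 1" if "i < n" for i
      proof -
        have "(g i)^2 \<le> nf n g" unfolding nf_def
          using that by (intro member_le_sum) auto
        then have "(g i)^2 \<le> 1^2" using ng by simp
        then show ?thesis using abs_le_square_iff[of "g i" 1] by simp
      qed
      then show ?thesis unfolding B_def g_def by (auto simp: abs_le_iff)
    qed
    then have "g \<in> K" unfolding K_def using ng by auto
    then have "bf n M g g \<le> bf n M f0 f0" by (rule mx)
    moreover have "bf n M g g = c^2 * bf n M f f"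
      using bf_cong[of n g "\<lambda>i. c * f i" M] bf_scale[of n M c f] unfolding g_def by simp
    ultimately have "bf n M f f / nf n f \<le> bf n M f0 f0" using c2 by simp
    then show ?thesis using p by (simp add: divide_le_eq)
  qed
  then show ?thesis using nf0 by blast
qed

lemma eig_iff:
  "eigenvalue (mat n n (\<lambda>(i,j). M i j)) \<mu> \<longleftrightarrow> (\<exists>f. (\<exists>i<n. f i \<noteq> 0) \<and> (\<forall>i<n. mv n M f i = \<mu> * f i))"
  (is "eigenvalue ?A _ \<longleftrightarrow> _")
proof
  assume "eigenvalue ?A \<mu>"
  then obtain v where v: "v \<in> carrier_vec n" "v \<noteq> 0\<^sub>v n" "?A *\<^sub>v v = \<mu> \<cdot>\<^sub>v v"
    unfolding eigenvalue_def eigenvector_def by auto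
  have "\<exists>i<n. v $ i \<noteq> 0"
  proof (rule ccontr)
    assume "\<not> ?thesis"
    then have "v = 0\<^sub>v n" using v(1) by (intro eq_vecI) auto
    then show False using v(2) by simp
  qed
  moreover have "mv n M (\<lambda>i. v $ i) i = \<mu> * v $ i" if "i < n" for i
  proof -
    have "(?A *\<^sub>v v) $ i = (\<mu> \<cdot>\<^sub>v v) $ i" using v(3) by simp
    then show ?thesis using that v(1)
      by (simp add: mv_def scalar_prod_def atLeast0LessThan)
  qed
  ultimately show "\<exists>f. (\<exists>i<n. f i \<noteq> 0) \<and> (\<forall>i<n. mv n M f i = \<mu> * f i)" by blast
next
  assume "\<exists>f. (\<exists>i<n. f i \<noteq> 0) \<and> (\<forall>i<n. mv n M f i = \<mu> * f i)"
  then obtain f where f: "\<exists>i<n. f i \<noteq> 0" "\<forall>i<n. mv n M f i = \<mu> * f i" by blast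
  define v where "v = vec n f"
  have "v \<in> carrier_vec n" unfolding v_def by simp
  moreover have "v \<noteq> 0\<^sub>v n" using f(1) unfolding v_def by (auto simp: vec_eq_iff)
  moreover have "?A *\<^sub>v v = \<mu> \<cdot>\<^sub>v v"
    using f(2) unfolding v_def by (intro eq_vecI) (auto simp: mv_def scalar_prod_def atLeast0LessThan)
  ultimately show "eigenvalue ?A \<mu>" unfolding eigenvalue_def eigenvector_def by auto
qed

lemma nf_pos: "i < n \<Longrightarrow> f i \<noteq> 0 \<Longrightarrow> nf n f > 0"
proof -
  assume a: "i < n" "f i \<noteq> 0"
  have "(f i)^2 \<le> nf n f" unfolding nf_def using a by (intro member_le_sum) auto
  moreover have "(f i)^2 > 0" using a by simp
  ultimately show ?thesis by linarith
qed

lemma eig_rayleigh: "\<forall>i<n. mv n M f i = \<mu> * f i \<Longrightarrow> bf n M f f = \<mu> * nf n f"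
  unfolding bf_mv nf_def by (simp add: sum_distrib_left power2_eq_square algebra_simps)

lemma spec:
  assumes n: "n \<ge> 1" and sym: "symm n M"
  defines "L \<equiv> lambda1 (mat n n (\<lambda>(i,j). M i j))"
  shows "\<exists>f. (\<exists>i<n. f i \<noteq> 0) \<and> (\<forall>i<n. mv n M f i = L * f i)"
    and "\<And>f. bf n M f f \<le> L * nf n f"
    and "\<And>\<nu>. eigenvalue (mat n n (\<lambda>(i,j). M i j)) \<nu> \<Longrightarrow> \<nu> \<le> L"
proof -
  let ?A = "mat n n (\<lambda>(i,j). M i j)"
  obtain f0 where f0: "nf n f0 = 1" and mx: "\<And>f. bf n M f f \<le> bf n M f0 f0 * nf n f"
    using max_exists[OF n, of M] by blast
  define \<mu> where "\<mu> = bf n M f0 f0"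
  have ev: "\<forall>i<n. mv n M f0 i = \<mu> * f0 i"
    using kernel_lemma[OF sym, of \<mu> f0] mx f0 unfolding \<mu>_def by simp
  have "\<exists>i<n. f0 i \<noteq> 0"
  proof (rule ccontr)
    assume "\<not> ?thesis"
    then have "nf n f0 = 0" unfolding nf_def by (intro sum.neutral) auto
    then show False using f0 by simp
  qed
  then have evA: "eigenvalue ?A \<mu>" unfolding eig_iff using ev by blast
  have le: "\<nu> \<le> \<mu>" if ev\<nu>: "eigenvalue ?A \<nu>" for \<nu>
  proof -
    obtain f where f: "\<exists>i<n. f i \<noteq> 0" "\<forall>i<n. mv n M f i = \<nu> * f i"
      using ev\<nu> unfolding eig_iff by blast
    have p: "nf n f > 0" using f(1) nf_pos by blast
    have "\<nu> * nf n f \<le> \<mu> * nf n f" using eig_rayleigh[OF f(2)] mx[of f] unfolding \<mu>_def by simp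
    then show ?thesis using p by simp
  qed
  have fin: "finite {x. eigenvalue ?A x}"
    using card_finite_spectrum(1)[of ?A n] unfolding spectrum_def by simp
  have L: "L = \<mu>" unfolding L_def lambda1_def
    by (rule Max_eqI[OF fin]) (use le evA in auto)
  show "\<exists>f. (\<exists>i<n. f i \<noteq> 0) \<and> (\<forall>i<n. mv n M f i = L * f i)"
    using ev \<open>\<exists>i<n. f0 i \<noteq> 0\<close> L by blast
  show "\<And>f. bf n M f f \<le> L * nf n f" using mx L unfolding \<mu>_def by (simp add: mult.commute)
  show "\<And>\<nu>. eigenvalue ?A \<nu> \<Longrightarrow> \<nu> \<le> L" using le L by simp
qed


definition lam :: "nat \<Rightarrow> (nat \<Rightarrow> nat \<Rightarrow> real) \<Rightarrow> real" where
  "lam n M = lambda1 (mat n n (\<lambda>(i,j). M i j))"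

lemma strict_mono:
  assumes n: "n \<ge> 1" and sA: "symm n A" and sB: "symm n B"
    and B0: "\<And>i j. i < n \<Longrightarrow> j < n \<Longrightarrow> B i j \<ge> 0"
    and Bp: "\<And>i j. i < n \<Longrightarrow> j < n \<Longrightarrow> i \<noteq> j \<Longrightarrow> B i j > 0"
    and AB: "\<And>i j. i < n \<Longrightarrow> j < n \<Longrightarrow> B i j \<le> A i j"
    and ex: "\<exists>i<n. \<exists>j<n. B i j < A i j"
  shows "lam n B < lam n A"
proof -
  let ?LB = "lam n B" and ?LA = "lam n A"
  obtain v where v: "\<exists>i<n. v i \<noteq> 0" "\<forall>i<n. mv n B v i = ?LB * v i"
    using spec(1)[OF n sB] unfolding lam_def by blast
  define w where "w i = \<bar>v i\<bar>" for i
  have nfw: "nf n w = nf n v" unfolding nf_def w_def by simp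
  have "bf n B v v \<le> bf n B w w" unfolding bf_def w_def
  proof (intro sum_mono)
    fix i j assume "i \<in> {..<n}" "j \<in> {..<n}"
    then have "B i j \<ge> 0" using B0 by auto
    then have "v i * B i j * v j \<le> \<bar>v i * B i j * v j\<bar>" by simp
    also have "\<dots> = \<bar>v i\<bar> * B i j * \<bar>v j\<bar>" using \<open>B i j \<ge> 0\<close> by (simp add: abs_mult)
    finally show "v i * B i j * v j \<le> \<bar>v i\<bar> * B i j * \<bar>v j\<bar>" .
  qed
  moreover have "bf n B v v = ?LB * nf n v" by (rule eig_rayleigh[OF v(2)])
  moreover have "bf n B w w \<le> ?LB * nf n w" using spec(2)[OF n sB] unfolding lam_def by blast
  ultimately have eqw: "bf n B w w = ?LB * nf n w" using nfw by simp
  have evw: "\<And>i. i < n \<Longrightarrow> mv n B w i = ?LB * w i"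
    by (rule kernel_lemma[OF sB _ eqw]) (use spec(2)[OF n sB] in \<open>auto simp: lam_def\<close>)
  obtain j0 where j0: "j0 < n" "v j0 \<noteq> 0" using v(1) by blast
  have wpos: "w i > 0" if i: "i < n" for i
  proof (rule ccontr)
    assume "\<not> w i > 0"
    then have wi: "w i = 0" unfolding w_def by simp
    then have "v i = 0" unfolding w_def by simp
    then have "i \<noteq> j0" using j0 by auto
    have "mv n B w i = 0" using evw[OF i] wi by simp
    moreover have "mv n B w i > 0" unfolding mv_def
    proof (rule sum_pos2[of _ j0])
      show "finite {..<n}" by simp
      show "j0 \<in> {..<n}" using j0 by simp
      show "0 < B i j0 * w j0" using Bp[OF i j0(1) \<open>i \<noteq> j0\<close>] j0 unfolding w_def by simp
      show "\<And>j. j \<in> {..<n} \<Longrightarrow> 0 \<le> B i j * w j" using B0[OF i] unfolding w_def by simp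
    qed
    ultimately show False by simp
  qed
  have "bf n B w w < bf n A w w" unfolding bf_def
  proof -
    obtain i1 j1 where ij: "i1 < n" "j1 < n" "B i1 j1 < A i1 j1" using ex by blast
    have le: "\<And>i j. i < n \<Longrightarrow> j < n \<Longrightarrow> w i * B i j * w j \<le> w i * A i j * w j"
      using AB wpos by (simp add: less_imp_le mult_left_mono mult_right_mono)
    have "(\<Sum>j<n. w i1 * B i1 j * w j) < (\<Sum>j<n. w i1 * A i1 j * w j)"
      by (rule sum_strict_mono_ex1) (use le ij wpos in auto)
    moreover have "\<And>i. i < n \<Longrightarrow> (\<Sum>j<n. w i * B i j * w j) \<le> (\<Sum>j<n. w i * A i j * w j)"
      by (intro sum_mono) (use le in auto)
    ultimately show "(\<Sum>i<n. \<Sum>j<n. w i * B i j * w j) < (\<Sum>i<n. \<Sum>j<n. w i * A i j * w j)"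
      by (intro sum_strict_mono_ex1) (use ij in auto)
  qed
  also have "bf n A w w \<le> ?LA * nf n w" using spec(2)[OF n sA] unfolding lam_def by blast
  finally have "?LB * nf n w < ?LA * nf n w" using eqw by simp
  moreover have "nf n w > 0" using nf_pos[of j0 n w] wpos[OF j0(1)] j0(1) by simp
  ultimately show ?thesis by simp
qed

lemma lower_bound:
  assumes n: "n \<ge> 1" and sA: "symm n A"
  shows "bf n A x x \<le> lam n A * nf n x"
  using spec(2)[OF n sA] unfolding lam_def by blast

lemma cw_bound:
  assumes n: "n \<ge> 1" and sB: "symm n B"
    and B0: "\<And>i j. i < n \<Longrightarrow> j < n \<Longrightarrow> B i j \<ge> 0"
    and y: "\<And>i. i < n \<Longrightarrow> y i > 0"
    and row: "\<And>i. i < n \<Longrightarrow> mv n B y i \<le> U * y i"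
  shows "lam n B \<le> U"
proof -
  let ?L = "lam n B"
  obtain v where v: "\<exists>i<n. v i \<noteq> 0" "\<forall>i<n. mv n B v i = ?L * v i"
    using spec(1)[OF n sB] unfolding lam_def by blast
  define q where "q i = \<bar>v i\<bar> / y i" for i
  define r where "r = Max (q ` {..<n})"
  have "r \<in> q ` {..<n}" unfolding r_def using n by (intro Max_in) (auto simp: lessThan_empty_iff)
  then obtain i0 where i0: "i0 < n" "r = q i0" by auto
  have qr: "q i \<le> r" if "i < n" for i unfolding r_def using that by (intro Max_ge) auto
  obtain j0 where j0: "j0 < n" "v j0 \<noteq> 0" using v(1) by blast
  have "q j0 > 0" unfolding q_def using j0 y by simp
  then have rpos: "r > 0" using qr[OF j0(1)] by simp
  then have vi0: "\<bar>v i0\<bar> > 0" using i0 y unfolding q_def by (simp add: zero_less_divide_iff)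
  have vr: "\<bar>v j\<bar> \<le> r * y j" if "j < n" for j
    using qr[OF that] y[OF that] unfolding q_def by (simp add: divide_le_eq)
  have "\<bar>?L\<bar> * \<bar>v i0\<bar> = \<bar>mv n B v i0\<bar>" using v(2) i0 by (simp add: abs_mult)
  also have "\<dots> \<le> (\<Sum>j<n. B i0 j * \<bar>v j\<bar>)" unfolding mv_def
    using B0[OF i0(1)] by (auto intro: order.trans[OF sum_abs] sum_mono simp: abs_mult)
  also have "\<dots> \<le> (\<Sum>j<n. B i0 j * (r * y j))"
    by (intro sum_mono mult_left_mono) (use vr B0[OF i0(1)] in auto)
  also have "\<dots> = r * mv n B y i0" unfolding mv_def by (simp add: sum_distrib_left algebra_simps)
  also have "\<dots> \<le> r * (U * y i0)" using row[OF i0(1)] rpos by simp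
  also have "\<dots> = U * \<bar>v i0\<bar>" using i0 y[OF i0(1)] unfolding q_def by simp
  finally have "\<bar>?L\<bar> \<le> U" using vi0 by simp
  then show ?thesis by simp
qed

lemma eig_perm_sub:
  fixes A B :: "nat \<Rightarrow> nat \<Rightarrow> real"
  assumes f: "bij_betw f {..<n} {..<n}" and AB: "\<And>i j. i < n \<Longrightarrow> j < n \<Longrightarrow> B (f i) (f j) = A i j"
    and ev: "eigenvalue (mat n n (\<lambda>(i,j). A i j)) \<nu>"
  shows "eigenvalue (mat n n (\<lambda>(i,j). B i j)) \<nu>"
proof -
  obtain g where g: "\<exists>i<n. g i \<noteq> 0" "\<forall>i<n. mv n A g i = \<nu> * g i" using ev unfolding eig_iff by blast
  define f' where "f' = inv_into {..<n} f"
  have f'f: "f' (f i) = i" if "i < n" for i unfolding f'_def using f that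
    by (simp add: bij_betw_def inv_into_f_f)
  have ff': "f (f' k) = k" if "k < n" for k unfolding f'_def using f that
    by (simp add: bij_betw_def f_inv_into_f)
  have f'r: "f' k < n" if "k < n" for k
    using f that unfolding f'_def by (metis bij_betw_def inv_into_into lessThan_iff)
  have fr: "f i < n" if "i < n" for i using f that by (auto simp: bij_betw_def)
  define h where "h k = g (f' k)" for k
  have "\<exists>k<n. h k \<noteq> 0" using g(1) fr f'f unfolding h_def by metis
  moreover have "mv n B h k = \<nu> * h k" if k: "k < n" for k
  proof -
    obtain i where i: "i < n" "k = f i" using ff' f'r k by metis
    have "mv n B h k = (\<Sum>j<n. B (f i) (f j) * h (f j))" unfolding mv_def i(2)
      using sum.reindex_bij_betw[OF f, of "\<lambda>j. B (f i) j * h j"] by simp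
    also have "\<dots> = (\<Sum>j<n. A i j * g j)" using AB i f'f unfolding h_def by (intro sum.cong) auto
    also have "\<dots> = \<nu> * h k" using g(2) i f'f unfolding h_def mv_def by simp
    finally show ?thesis .
  qed
  ultimately show ?thesis unfolding eig_iff by blast
qed

lemma lam_perm:
  fixes A B :: "nat \<Rightarrow> nat \<Rightarrow> real"
  assumes f: "bij_betw f {..<n} {..<n}" and AB: "\<And>i j. i < n \<Longrightarrow> j < n \<Longrightarrow> B (f i) (f j) = A i j"
  shows "lam n A = lam n B"
proof -
  define f' where "f' = inv_into {..<n} f"
  have f': "bij_betw f' {..<n} {..<n}" unfolding f'_def by (rule bij_betw_inv_into[OF f])
  have ff': "f (f' k) = k" if "k < n" for k unfolding f'_def using f that
    by (simp add: bij_betw_def f_inv_into_f)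
  have f'r: "f' k < n" if "k < n" for k
    using f' that by (auto simp: bij_betw_def)
  have BA: "A (f' i) (f' j) = B i j" if "i < n" "j < n" for i j
    using AB[OF f'r[OF that(1)] f'r[OF that(2)]] ff' that by simp
  have "{x. eigenvalue (mat n n (\<lambda>(i,j). A i j)) x} = {x. eigenvalue (mat n n (\<lambda>(i,j). B i j)) x}"
    using eig_perm_sub[of f n B A, OF f AB] eig_perm_sub[of f' n A B, OF f' BA] by blast
  then show ?thesis unfolding lam_def lambda1_def by simp
qed

lemma walk_nonempty: "walk_in adj W xs \<Longrightarrow> xs \<noteq> []"
  by (cases xs) auto

lemma walk_snoc: "walk_in adj W xs \<Longrightarrow> adj (last xs) y \<Longrightarrow> y \<in> W \<Longrightarrow> walk_in adj W (xs @ [y])"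
  by (induction adj W xs rule: walk_in.induct) auto

lemma walk_rev:
  assumes sy: "\<And>u v. adj u v \<Longrightarrow> adj v u"
  shows "walk_in adj W xs \<Longrightarrow> walk_in adj W (rev xs)"
proof (induction xs rule: induct_list012)
  case (3 x y xs)
  then have "walk_in adj W (rev (y # xs))" by simp
  moreover have "last (rev (y # xs)) = y" by simp
  ultimately have "walk_in adj W (rev (y # xs) @ [x])"
    using 3 by (intro walk_snoc) (auto intro: sy)
  then show ?case by simp
qed auto

definition Dm :: "nat \<Rightarrow> (nat \<Rightarrow> nat \<Rightarrow> bool) \<Rightarrow> nat \<Rightarrow> nat \<Rightarrow> real" where
  "Dm n adj i j = real (gdist n adj i j)"

definition Tm :: "(nat \<Rightarrow> nat \<Rightarrow> bool) \<Rightarrow> nat \<Rightarrow> nat \<Rightarrow> real" where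
  "Tm adj i j = (if i = j then 0 else if adj i j then 1 else 2)"

lemma dsr_lam: "dist_spectral_radius n adj = lam n (Dm n adj)"
  unfolding dist_spectral_radius_def dist_matrix_def lam_def Dm_def by simp

lemma lam_cong: "(\<And>i j. i < n \<Longrightarrow> j < n \<Longrightarrow> A i j = B i j) \<Longrightarrow> lam n A = lam n B"
  unfolding lam_def by (rule arg_cong[where f = lambda1]) (intro eq_matI, auto)

lemma gdist_sym:
  assumes g: "graph n adj"
  shows "gdist n adj u v = gdist n adj v u"
proof -
  have sym: "\<And>u v. adj u v \<Longrightarrow> adj v u" using g unfolding graph_def by blast
  have "(\<exists>xs. walk_in adj {0..<n} xs \<and> hd xs = u \<and> last xs = v \<and> length xs = Suc m) \<longleftrightarrow>
        (\<exists>xs. walk_in adj {0..<n} xs \<and> hd xs = v \<and> last xs = u \<and> length xs = Suc m)" for m u v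
  proof -
    have *: "(\<exists>xs. walk_in adj {0..<n} xs \<and> hd xs = v \<and> last xs = u \<and> length xs = Suc m)"
      if "walk_in adj {0..<n} xs" "hd xs = u" "last xs = v" "length xs = Suc m" for xs u v
    proof (intro exI[of _ "rev xs"] conjI)
      show "walk_in adj {0..<n} (rev xs)" using walk_rev[OF sym that(1)] by blast
      have "xs \<noteq> []" using walk_nonempty[OF that(1)] .
      then show "hd (rev xs) = v" "last (rev xs) = u" using that by (auto simp: hd_rev last_rev)
      show "length (rev xs) = Suc m" using that by simp
    qed
    show ?thesis using * by blast
  qed
  then show ?thesis unfolding gdist_def by presburger
qed

lemma symm_Dm: "graph n adj \<Longrightarrow> symm n (Dm n adj)"
  unfolding symm_def Dm_def using gdist_sym by metis

lemma symm_Tm: "(\<And>u v. adj u v \<Longrightarrow> adj v u) \<Longrightarrow> symm n (Tm adj)"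
  unfolding symm_def Tm_def by auto

lemma walk_len1: "walk_in adj W xs \<Longrightarrow> length xs = Suc 0 \<Longrightarrow> hd xs = last xs"
  by (cases xs) auto

lemma walk_len2:
  assumes "walk_in adj W xs" "length xs = Suc (Suc 0)" shows "adj (hd xs) (last xs)"
proof -
  obtain x y where "xs = [x,y]" using assms(2) by (metis length_0_conv length_Suc_conv)
  then show ?thesis using assms(1) by simp
qed

lemma gdist_lower:
  assumes c: "connected_graph n adj" and u: "u < n" and v: "v < n" and uv: "u \<noteq> v"
  shows "gdist n adj u v \<ge> 1" and "\<not> adj u v \<Longrightarrow> gdist n adj u v \<ge> 2"
proof -
  let ?P = "\<lambda>m. \<exists>xs. walk_in adj {0..<n} xs \<and> hd xs = u \<and> last xs = v \<and> length xs = Suc m"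
  obtain xs where "walk_in adj {0..<n} xs" "hd xs = u" "last xs = v"
    using c u v unfolding connected_graph_def reach_in_def by blast
  then have "?P (length xs - 1)" using walk_nonempty by (intro exI[of _ xs]) fastforce
  then have PL: "?P (gdist n adj u v)" unfolding gdist_def by (rule LeastI)
  have n0: "\<not> ?P 0" using walk_len1 uv by fastforce
  show "gdist n adj u v \<ge> 1"
  proof (rule ccontr)
    assume "\<not> ?thesis" then have "gdist n adj u v = 0" by simp
    then show False using PL n0 by simp
  qed
  assume na: "\<not> adj u v"
  have n1: "\<not> ?P 1" using walk_len2 na by fastforce
  show "gdist n adj u v \<ge> 2"
  proof (rule ccontr)
    assume "\<not> ?thesis" then have "gdist n adj u v = 0 \<or> gdist n adj u v = 1" by arith
    then show False using PL n0 n1 by auto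
  qed
qed

lemma Tm_le_Dm:
  assumes c: "connected_graph n adj" and i: "i < n" and j: "j < n"
  shows "Tm adj i j \<le> Dm n adj i j"
  using gdist_lower[OF c i j] unfolding Tm_def Dm_def by auto

lemma Dm_eq_Tm:
  assumes g: "graph n adj" and i: "i < n" and j: "j < n"
    and cn: "i \<noteq> j \<Longrightarrow> \<not> adj i j \<Longrightarrow> \<exists>w. adj i w \<and> adj w j"
  shows "Dm n adj i j = Tm adj i j"
proof -
  let ?P = "\<lambda>m. \<exists>xs. walk_in adj {0..<n} xs \<and> hd xs = i \<and> last xs = j \<and> length xs = Suc m"
  have gd: "gdist n adj i j = (LEAST m. ?P m)" unfolding gdist_def ..
  have inV: "\<And>u v. adj u v \<Longrightarrow> u \<in> {0..<n} \<and> v \<in> {0..<n}" using g unfolding graph_def by auto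
  show ?thesis
  proof (cases "i = j")
    case True
    have "?P 0" using True i by (intro exI[of _ "[i]"]) auto
    then have "gdist n adj i j = 0" unfolding gd by (intro Least_eq_0)
    then show ?thesis using True unfolding Dm_def Tm_def by simp
  next
    case False
    have n0: "\<not> ?P 0" using walk_len1 False by fastforce
    show ?thesis
    proof (cases "adj i j")
      case True
      have "?P 1" using True inV by (intro exI[of _ "[i,j]"]) auto
      then have "gdist n adj i j \<le> 1" unfolding gd by (rule Least_le)
      moreover have "gdist n adj i j \<noteq> 0" using LeastI[of ?P 1, OF \<open>?P 1\<close>] n0 unfolding gd by auto
      ultimately show ?thesis using False True unfolding Dm_def Tm_def by simp
    next
      case na: False
      obtain w where w: "adj i w" "adj w j" using cn False na by blast
      have "?P 2" using w inV by (intro exI[of _ "[i,w,j]"]) auto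
      then have "gdist n adj i j \<le> 2" unfolding gd by (rule Least_le)
      moreover have n1: "\<not> ?P 1" using walk_len2 na by fastforce
      have "gdist n adj i j \<noteq> 0" "gdist n adj i j \<noteq> 1"
        using LeastI[of ?P 2, OF \<open>?P 2\<close>] n0 n1 unfolding gd by auto
      ultimately have "gdist n adj i j = 2" by arith
      then show ?thesis using False na unfolding Dm_def Tm_def by simp
    qed
  qed
qed

definition adjH :: "nat \<Rightarrow> nat set \<Rightarrow> nat set \<Rightarrow> nat \<Rightarrow> nat \<Rightarrow> bool" where
  "adjH n S I u v \<longleftrightarrow> u < n \<and> v < n \<and> u \<noteq> v \<and> (u \<in> S \<or> v \<in> S \<or> (u \<notin> I \<and> v \<notin> I))"

definition xv :: "nat set \<Rightarrow> nat set \<Rightarrow> real \<Rightarrow> real \<Rightarrow> real \<Rightarrow> nat \<Rightarrow> real" where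
  "xv S I a b d i = (if i \<in> S then a else if i \<in> I then d else b)"

definition rS :: "nat \<Rightarrow> nat \<Rightarrow> real \<Rightarrow> real \<Rightarrow> real \<Rightarrow> real" where
  "rS s c a b d = (real s - 1) * a + real c * b + real s * d"
definition rC :: "nat \<Rightarrow> nat \<Rightarrow> real \<Rightarrow> real \<Rightarrow> real \<Rightarrow> real" where
  "rC s c a b d = real s * a + (real c - 1) * b + 2 * real s * d"
definition rI :: "nat \<Rightarrow> nat \<Rightarrow> real \<Rightarrow> real \<Rightarrow> real \<Rightarrow> real" where
  "rI s c a b d = real s * a + 2 * real c * b + 2 * (real s - 1) * d"
definition Qf :: "nat \<Rightarrow> nat \<Rightarrow> real \<Rightarrow> real \<Rightarrow> real \<Rightarrow> real" where
  "Qf s c a b d = real s * a * rS s c a b d + real c * b * rC s c a b d + real s * d * rI s c a b d"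
definition Nf :: "nat \<Rightarrow> nat \<Rightarrow> real \<Rightarrow> real \<Rightarrow> real \<Rightarrow> real" where
  "Nf s c a b d = real s * a^2 + real c * b^2 + real s * d^2"

locale cls =
  fixes n :: nat and S I :: "nat set" and s c :: nat
  assumes S: "S \<subseteq> {..<n}" and I: "I \<subseteq> {..<n}" and SI: "S \<inter> I = {}"
    and cS: "card S = s" and cI: "card I = s" and cC: "card ({..<n} - S - I) = c"
begin

definition "C = {..<n} - S - I"

lemma fin: "finite S" "finite I" "finite C"
  using S I finite_subset unfolding C_def by auto

lemma n_eq: "n = 2 * s + c"
proof -
  have "{..<n} = S \<union> I \<union> C" using S I unfolding C_def by auto
  moreover have "card (S \<union> I \<union> C) = card (S \<union> I) + card C"
    using fin unfolding C_def by (intro card_Un_disjoint) auto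
  moreover have "card (S \<union> I) = card S + card I" using fin SI by (intro card_Un_disjoint) auto
  ultimately have "card {..<n} = card S + card I + card C" by simp
  then show ?thesis using cS cI cC unfolding C_def by simp
qed

lemma sum_if_eq: "finite P \<Longrightarrow> (\<Sum>j\<in>P. if j = i then 0 else K) = (real (card P) - (if i \<in> P then 1 else 0)) * (K::real)"
proof -
  assume fP: "finite P"
  show ?thesis
  proof (cases "i \<in> P")
    case True
    have "(\<Sum>j\<in>P. if j = i then 0 else K) = (\<Sum>j\<in>P - {i}. K)"
    proof -
      have "(\<Sum>j\<in>P. if j = i then 0 else K) = (if i = i then 0 else K) + (\<Sum>j\<in>P - {i}. if j = i then 0 else K)"
        using fP True by (rule sum.remove)
      also have "(\<Sum>j\<in>P - {i}. if j = i then 0 else K) = (\<Sum>j\<in>P - {i}. K)" by (intro sum.cong) auto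
      finally show ?thesis by simp
    qed
    moreover have "card P \<ge> 1" using True fP by (metis One_nat_def Suc_leI card_gt_0_iff empty_iff)
    ultimately show ?thesis using True fP by (simp add: card_Diff_singleton of_nat_diff)
  next
    case False
    then have "(\<Sum>j\<in>P. if j = i then 0 else K) = (\<Sum>j\<in>P. K)" by (intro sum.cong) auto
    then show ?thesis using False by simp
  qed
qed

lemma split_sum: "(\<Sum>j<n. g j) = (\<Sum>j\<in>S. g j) + (\<Sum>j\<in>I. g j) + (\<Sum>j\<in>C. g j)"
proof -
  have "{..<n} = S \<union> I \<union> C" using S I unfolding C_def by auto
  moreover have "(S \<union> I) \<inter> C = {}" unfolding C_def by auto
  ultimately show ?thesis using fin SI by (simp add: sum.union_disjoint)
qed

lemma row:
  assumes i: "i < n"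
  shows "mv n (Tm (adjH n S I)) (xv S I a b d) i =
    (if i \<in> S then rS s c a b d else if i \<in> I then rI s c a b d else rC s c a b d)"
proof -
  let ?g = "\<lambda>j. Tm (adjH n S I) i j * xv S I a b d j"
  have gS: "(\<Sum>j\<in>S. ?g j) = (\<Sum>j\<in>S. if j = i then 0 else a)"
    using S i SI by (intro sum.cong refl) (auto simp: Tm_def adjH_def xv_def)
  have gI: "(\<Sum>j\<in>I. ?g j) = (\<Sum>j\<in>I. if j = i then 0 else (if i \<in> S then 1 else 2) * d)"
    using I i SI by (intro sum.cong refl) (auto simp: Tm_def adjH_def xv_def)
  have gC: "(\<Sum>j\<in>C. ?g j) = (\<Sum>j\<in>C. if j = i then 0 else (if i \<in> I then 2 else 1) * b)"
    using i SI unfolding C_def by (intro sum.cong refl) (auto simp: Tm_def adjH_def xv_def)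
  have "mv n (Tm (adjH n S I)) (xv S I a b d) i = (\<Sum>j\<in>S. ?g j) + (\<Sum>j\<in>I. ?g j) + (\<Sum>j\<in>C. ?g j)"
    unfolding mv_def by (rule split_sum)
  also have "\<dots> = (real s - (if i \<in> S then 1 else 0)) * a + (real s - (if i \<in> I then 1 else 0)) * ((if i \<in> S then 1 else 2) * d)
     + (real c - (if i \<in> C then 1 else 0)) * ((if i \<in> I then 2 else 1) * b)"
    unfolding gS gI gC using fin cS cI cC unfolding C_def by (simp add: sum_if_eq)
  also have "\<dots> = (if i \<in> S then rS s c a b d else if i \<in> I then rI s c a b d else rC s c a b d)"
    using SI i unfolding rS_def rI_def rC_def C_def by (auto simp: algebra_simps)
  finally show ?thesis .
qed

lemma quad: "bf n (Tm (adjH n S I)) (xv S I a b d) (xv S I a b d) = Qf s c a b d"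
proof -
  have "bf n (Tm (adjH n S I)) (xv S I a b d) (xv S I a b d)
     = (\<Sum>j<n. xv S I a b d j * mv n (Tm (adjH n S I)) (xv S I a b d) j)" by (rule bf_mv)
  also have "\<dots> = (\<Sum>j\<in>S. a * rS s c a b d) + (\<Sum>j\<in>I. d * rI s c a b d) + (\<Sum>j\<in>C. b * rC s c a b d)"
    unfolding split_sum using S I SI row by (intro arg_cong2[where f = "(+)"] sum.cong refl)
      (auto simp: xv_def C_def)
  also have "\<dots> = Qf s c a b d" using cS cI cC unfolding Qf_def C_def by (simp add: algebra_simps)
  finally show ?thesis .
qed

lemma norm: "nf n (xv S I a b d) = Nf s c a b d"
proof -
  have "nf n (xv S I a b d) = (\<Sum>j\<in>S. a^2) + (\<Sum>j\<in>I. d^2) + (\<Sum>j\<in>C. b^2)"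
    unfolding nf_def split_sum using S I SI by (intro arg_cong2[where f = "(+)"] sum.cong refl)
      (auto simp: xv_def C_def)
  also have "\<dots> = Nf s c a b d" using cS cI cC unfolding Nf_def C_def by (simp add: algebra_simps)
  finally show ?thesis .
qed

lemma symH: "symm n (Tm (adjH n S I))"
  by (rule symm_Tm) (auto simp: adjH_def)

lemma lower:
  assumes c: "connected_graph n adj" and sub: "\<And>u v. adj u v \<Longrightarrow> adjH n S I u v"
    and a: "a \<ge> 0" and b: "b \<ge> 0" and d: "d \<ge> 0"
  shows "Qf s c a b d \<le> dist_spectral_radius n adj * Nf s c a b d"
proof -
  have g: "graph n adj" and n: "n \<ge> 1" using c unfolding connected_graph_def by auto
  let ?x = "xv S I a b d"
  have "Qf s c a b d = bf n (Tm (adjH n S I)) ?x ?x" by (rule quad[symmetric])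
  also have "\<dots> \<le> bf n (Dm n adj) ?x ?x" unfolding bf_def
  proof (intro sum_mono)
    fix i j assume ij: "i \<in> {..<n}" "j \<in> {..<n}"
    have "Tm (adjH n S I) i j \<le> Tm adj i j" using sub unfolding Tm_def by auto
    also have "\<dots> \<le> Dm n adj i j" using Tm_le_Dm[OF c] ij by auto
    finally have "Tm (adjH n S I) i j \<le> Dm n adj i j" .
    moreover have "?x i \<ge> 0" "?x j \<ge> 0" using a b d unfolding xv_def by auto
    ultimately show "?x i * Tm (adjH n S I) i j * ?x j \<le> ?x i * Dm n adj i j * ?x j"
      by (simp add: mult_left_mono mult_right_mono)
  qed
  also have "\<dots> \<le> lam n (Dm n adj) * nf n ?x" by (rule lower_bound[OF n symm_Dm[OF g]])
  finally show ?thesis unfolding dsr_lam norm .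
qed

lemma cw:
  assumes n: "n \<ge> 1" and a: "a > 0" and b: "b > 0" and d: "d > 0"
    and hS: "rS s c a b d \<le> U * a" and hI: "rI s c a b d \<le> U * d" and hC: "rC s c a b d \<le> U * b"
  shows "lam n (Tm (adjH n S I)) \<le> U"
proof (rule cw_bound[OF n symH])
  show "\<And>i j. i < n \<Longrightarrow> j < n \<Longrightarrow> 0 \<le> Tm (adjH n S I) i j" unfolding Tm_def by auto
  show "\<And>i. i < n \<Longrightarrow> 0 < xv S I a b d i" using a b d unfolding xv_def by auto
  show "\<And>i. i < n \<Longrightarrow> mv n (Tm (adjH n S I)) (xv S I a b d) i \<le> U * xv S I a b d i"
    using row hS hI hC unfolding xv_def by auto
qed

lemma strict:
  assumes c: "connected_graph n adj" and sub: "\<And>u v. adj u v \<Longrightarrow> adjH n S I u v"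
    and ex: "\<exists>u<n. \<exists>v<n. adjH n S I u v \<and> \<not> adj u v"
  shows "lam n (Tm (adjH n S I)) < dist_spectral_radius n adj"
  unfolding dsr_lam
proof (rule strict_mono)
  have g: "graph n adj" using c unfolding connected_graph_def by auto
  show "n \<ge> 1" using c unfolding connected_graph_def by auto
  show "symm n (Dm n adj)" by (rule symm_Dm[OF g])
  show "symm n (Tm (adjH n S I))" by (rule symH)
  show "\<And>i j. i < n \<Longrightarrow> j < n \<Longrightarrow> 0 \<le> Tm (adjH n S I) i j" unfolding Tm_def by auto
  show "\<And>i j. i < n \<Longrightarrow> j < n \<Longrightarrow> i \<noteq> j \<Longrightarrow> 0 < Tm (adjH n S I) i j" unfolding Tm_def by auto
  show "\<And>i j. i < n \<Longrightarrow> j < n \<Longrightarrow> Tm (adjH n S I) i j \<le> Dm n adj i j"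
  proof -
    fix i j assume ij: "i < n" "j < n"
    have "Tm (adjH n S I) i j \<le> Tm adj i j" using sub unfolding Tm_def by auto
    also have "\<dots> \<le> Dm n adj i j" using Tm_le_Dm[OF c ij] .
    finally show "Tm (adjH n S I) i j \<le> Dm n adj i j" .
  qed
  obtain u v where uv: "u < n" "v < n" "adjH n S I u v" "\<not> adj u v" using ex by blast
  then have "u \<noteq> v" unfolding adjH_def by auto
  then have "Tm adj u v \<le> Dm n adj u v" "Tm (adjH n S I) u v = 1" "Tm adj u v = 2"
    using Tm_le_Dm[OF c uv(1,2)] uv unfolding Tm_def by auto
  then show "\<exists>i<n. \<exists>j<n. Tm (adjH n S I) i j < Dm n adj i j" using uv by force
qed

end

lemma graph_adjH: "graph n (adjH n S I)"
  unfolding graph_def adjH_def by auto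

lemma dsr_target:
  assumes S0: "S0 \<subseteq> {..<n}" and s0: "s0 \<in> S0"
  shows "dist_spectral_radius n (adjH n S0 I0) = lam n (Tm (adjH n S0 I0))"
  unfolding dsr_lam
proof (rule lam_cong)
  fix i j assume ij: "i < n" "j < n"
  show "Dm n (adjH n S0 I0) i j = Tm (adjH n S0 I0) i j"
  proof (rule Dm_eq_Tm[OF graph_adjH ij])
    assume "i \<noteq> j" "\<not> adjH n S0 I0 i j"
    then have "i \<notin> S0" "j \<notin> S0" using ij unfolding adjH_def by auto
    then show "\<exists>w. adjH n S0 I0 i w \<and> adjH n S0 I0 w j"
      using s0 S0 ij by (intro exI[of _ s0]) (auto simp: adjH_def)
  qed
qed

lemma K1_eq: "n \<ge> 2 \<Longrightarrow> K1_join_Kn2_K1 n = adjH n {0} {n-1}"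
  unfolding K1_join_Kn2_K1_def adjH_def by (intro ext) auto

lemma S_eq: "S_graph n k = adjH n {..<k} {k..<n}"
  unfolding S_graph_def adjH_def by (intro ext) auto

lemma perm_adjH:
  assumes f: "bij_betw f {..<n} {..<n}" and S: "S \<subseteq> {..<n}" and I: "I \<subseteq> {..<n}"
    and fS: "f ` S = S0" and fI: "f ` I = I0" and u: "u < n" and v: "v < n"
  shows "adjH n S I u v \<longleftrightarrow> adjH n S0 I0 (f u) (f v)"
proof -
  have inj: "inj_on f {..<n}" and rng: "f ` {..<n} = {..<n}" using f by (auto simp: bij_betw_def)
  have memS: "f x \<in> S0 \<longleftrightarrow> x \<in> S" if "x < n" for x
    using fS S that inj unfolding inj_on_def by auto
  have memI: "f x \<in> I0 \<longleftrightarrow> x \<in> I" if "x < n" for x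
    using fI I that inj unfolding inj_on_def by auto
  have "f u < n" "f v < n" using rng u v by auto
  moreover have "f u = f v \<longleftrightarrow> u = v" using inj u v unfolding inj_on_def by auto
  ultimately show ?thesis unfolding adjH_def using memS[OF u] memS[OF v] memI[OF u] memI[OF v] u v by auto
qed

lemma lam_perm_H:
  assumes f: "bij_betw f {..<n} {..<n}" and S: "S \<subseteq> {..<n}" and I: "I \<subseteq> {..<n}"
    and fS: "f ` S = S0" and fI: "f ` I = I0"
  shows "lam n (Tm (adjH n S I)) = lam n (Tm (adjH n S0 I0))"
proof (rule lam_perm[OF f])
  fix i j assume ij: "i < n" "j < n"
  have inj: "inj_on f {..<n}" using f by (auto simp: bij_betw_def)
  have "f i = f j \<longleftrightarrow> i = j" using inj ij unfolding inj_on_def by auto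
  then show "Tm (adjH n S0 I0) (f i) (f j) = Tm (adjH n S I) i j"
    unfolding Tm_def using perm_adjH[OF f S I fS fI ij] by simp
qed

lemma card_rest:
  fixes n :: nat and S I :: "nat set"
  assumes S: "S \<subseteq> {..<n}" and I: "I \<subseteq> {..<n}" and SI: "S \<inter> I = {}"
  shows "card ({..<n} - S - I) = n - card S - card I"
proof -
  have fS: "finite S" "finite I" using finite_subset[OF S] finite_subset[OF I] by auto
  have "{..<n} - S - I = {..<n} - (S \<union> I)" by auto
  moreover have "card ({..<n} - (S \<union> I)) = card {..<n} - card (S \<union> I)"
    using S I by (intro card_Diff_subset) (auto simp: fS)
  moreover have "card (S \<union> I) = card S + card I" using fS SI by (rule card_Un_disjoint)
  ultimately show ?thesis by simp
qed

lemma exists_perm: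
  fixes n :: nat and S I S0 I0 :: "nat set"
  assumes S: "S \<subseteq> {..<n}" and I: "I \<subseteq> {..<n}" and SI: "S \<inter> I = {}"
    and S0: "S0 \<subseteq> {..<n}" and I0: "I0 \<subseteq> {..<n}" and SI0: "S0 \<inter> I0 = {}"
    and cS: "card S = card S0" and cI: "card I = card I0"
  shows "\<exists>f. bij_betw f {..<n} {..<n} \<and> f ` S = S0 \<and> f ` I = I0"
proof -
  define C where "C = {..<n} - S - I"
  define C0 where "C0 = {..<n} - S0 - I0"
  have fin: "finite S" "finite I" "finite C" "finite S0" "finite I0" "finite C0"
    using finite_subset[OF S] finite_subset[OF I] finite_subset[OF S0] finite_subset[OF I0]
    by (auto simp: C_def C0_def)
  have "card C = n - card S - card I"
    unfolding C_def using S I SI by (rule card_rest)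
  moreover have "card C0 = n - card S0 - card I0"
    unfolding C0_def using S0 I0 SI0 by (rule card_rest)
  ultimately have cC: "card C = card C0" using cS cI by simp
  obtain f1 where f1: "bij_betw f1 S S0" using finite_same_card_bij[OF fin(1) fin(4) cS] by blast
  obtain f2 where f2: "bij_betw f2 I I0" using finite_same_card_bij[OF fin(2) fin(5) cI] by blast
  obtain f3 where f3: "bij_betw f3 C C0" using finite_same_card_bij[OF fin(3) fin(6) cC] by blast
  define f where "f x = (if x \<in> S then f1 x else if x \<in> I then f2 x else f3 x)" for x
  have b1: "bij_betw f S S0" using f1 by (subst bij_betw_cong[of S f f1]) (auto simp: f_def)
  have b2: "bij_betw f I I0" using f2 SI by (subst bij_betw_cong[of I f f2]) (auto simp: f_def)
  have b3: "bij_betw f C C0" using f3 by (subst bij_betw_cong[of C f f3]) (auto simp: f_def C_def)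
  have "bij_betw f (S \<union> I) (S0 \<union> I0)" by (rule bij_betw_combine[OF b1 b2 SI0])
  then have "bij_betw f ((S \<union> I) \<union> C) ((S0 \<union> I0) \<union> C0)"
    by (rule bij_betw_combine[OF _ b3]) (auto simp: C0_def)
  moreover have "(S \<union> I) \<union> C = {..<n}" "(S0 \<union> I0) \<union> C0 = {..<n}"
    using S I S0 I0 unfolding C_def C0_def by auto
  ultimately have "bij_betw f {..<n} {..<n}" by simp
  moreover have "f ` S = S0" using b1 by (simp add: bij_betw_def)
  moreover have "f ` I = I0" using b2 by (simp add: bij_betw_def)
  ultimately show ?thesis by blast
qed

definition U1 :: "nat \<Rightarrow> real" where
  "U1 n = (if n = 5 then (5347/1000) else (if n = 6 then (3267/500) else (if n = 7 then (307/40) else (if n = 8 then (2197/250) else (if n = 9 then (4941/500) else (if n = 10 then (5481/500) else (if n = 11 then (12031/1000) else (if n = 12 then (1309/100) else (if n = 13 then (14143/1000) else (if n = 14 then (15189/1000) else real n + 2))))))))))"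

definition U2 :: "nat \<Rightarrow> real" where
  "U2 n = (if n = 4 then (3563/1000) else (if n = 6 then (6163/1000) else (if n = 8 then (8773/1000) else 0)))"

lemma num1_small:
  assumes s: "2 \<le> s" and n: "2 * s + c \<le> 14" and p: "odd (2 * s + c) \<or> 2 * s + c \<ge> 10"
  shows "\<exists>a b d. a \<ge> 0 \<and> b \<ge> 0 \<and> d \<ge> 0 \<and> U1 (2 * s + c) * Nf s c a b d < Qf s c a b d"
proof -
  have "(s = 2 \<and> c = 1) \<or> (s = 2 \<and> c = 3) \<or> (s = 3 \<and> c = 1) \<or> (s = 2 \<and> c = 5) \<or> (s = 3 \<and> c = 3) \<or> (s = 4 \<and> c = 1) \<or> (s = 2 \<and> c = 6) \<or> (s = 3 \<and> c = 4) \<or> (s = 4 \<and> c = 2) \<or> (s = 5 \<and> c = 0) \<or> (s = 2 \<and> c = 7) \<or> (s = 3 \<and> c = 5) \<or> (s = 4 \<and> c = 3) \<or> (s = 5 \<and> c = 1) \<or> (s = 2 \<and> c = 8) \<or> (s = 3 \<and> c = 6) \<or> (s = 4 \<and> c = 4) \<or> (s = 5 \<and> c = 2) \<or> (s = 6 \<and> c = 0) \<or> (s = 2 \<and> c = 9) \<or> (s = 3 \<and> c = 7) \<or> (s = 4 \<and> c = 5) \<or> (s = 5 \<and> c = 3) \<or> (s = 6 \<and> c = 1) \<or> (s = 2 \<and> c = 10) \<or> (s = 3 \<and> c = 8) \<or> (s = 4 \<and> c = 6) \<or> (s = 5 \<and> c = 4) \<or> (s = 6 \<and> c = 2) \<or>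 (s = 7 \<and> c = 0)"
    using s n p by presburger
  then show ?thesis
  proof (elim disjE conjE)
    assume "s = 2" "c = 1"
    then show ?thesis apply (simp only:) apply (rule exI[of _ "(343/500)"], rule exI[of _ "1"], rule exI[of _ "1"]) by (simp add: Qf_def Nf_def rS_def rC_def rI_def U1_def U2_def power2_eq_square)
  next
    assume "s = 2" "c = 3"
    then show ?thesis apply (simp only:) apply (rule exI[of _ "(621/1000)"], rule exI[of _ "(837/1000)"], rule exI[of _ "1"]) by (simp add: Qf_def Nf_def rS_def rC_def rI_def U1_def U2_def power2_eq_square)
  next
    assume "s = 3" "c = 1"
    then show ?thesis apply (simp only:) apply (rule exI[of _ "(667/1000)"], rule exI[of _ "1"], rule exI[of _ "1"]) by (simp add: Qf_def Nf_def rS_def rC_def rI_def U1_def U2_def power2_eq_square)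
  next
    assume "s = 2" "c = 5"
    then show ?thesis apply (simp only:) apply (rule exI[of _ "(593/1000)"], rule exI[of _ "(381/500)"], rule exI[of _ "1"]) by (simp add: Qf_def Nf_def rS_def rC_def rI_def U1_def U2_def power2_eq_square)
  next
    assume "s = 3" "c = 3"
    then show ?thesis apply (simp only:) apply (rule exI[of _ "(309/500)"], rule exI[of _ "(867/1000)"], rule exI[of _ "1"]) by (simp add: Qf_def Nf_def rS_def rC_def rI_def U1_def U2_def power2_eq_square)
  next
    assume "s = 4" "c = 1"
    then show ?thesis apply (simp only:) apply (rule exI[of _ "(82/125)"], rule exI[of _ "1"], rule exI[of _ "1"]) by (simp add: Qf_def Nf_def rS_def rC_def rI_def U1_def U2_def power2_eq_square)
  next
    assume "s = 2" "c = 6"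
    then show ?thesis apply (simp only:) apply (rule exI[of _ "(583/1000)"], rule exI[of _ "(737/1000)"], rule exI[of _ "1"]) by (simp add: Qf_def Nf_def rS_def rC_def rI_def U1_def U2_def power2_eq_square)
  next
    assume "s = 3" "c = 4"
    then show ?thesis apply (simp only:) apply (rule exI[of _ "(121/200)"], rule exI[of _ "(207/250)"], rule exI[of _ "1"]) by (simp add: Qf_def Nf_def rS_def rC_def rI_def U1_def U2_def power2_eq_square)
  next
    assume "s = 4" "c = 2"
    then show ?thesis apply (simp only:) apply (rule exI[of _ "(633/1000)"], rule exI[of _ "(187/200)"], rule exI[of _ "1"]) by (simp add: Qf_def Nf_def rS_def rC_def rI_def U1_def U2_def power2_eq_square)
  next
    assume "s = 5" "c = 0"
    then show ?thesis apply (simp only:) apply (rule exI[of _ "(313/500)"], rule exI[of _ "1"], rule exI[of _ "(37/40)"]) by (simp add: Qf_def Nf_def rS_def rC_def rI_def U1_def U2_def power2_eq_square)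
  next
    assume "s = 2" "c = 7"
    then show ?thesis apply (simp only:) apply (rule exI[of _ "(72/125)"], rule exI[of _ "(717/1000)"], rule exI[of _ "1"]) by (simp add: Qf_def Nf_def rS_def rC_def rI_def U1_def U2_def power2_eq_square)
  next
    assume "s = 3" "c = 5"
    then show ?thesis apply (simp only:) apply (rule exI[of _ "(297/500)"], rule exI[of _ "(399/500)"], rule exI[of _ "1"]) by (simp add: Qf_def Nf_def rS_def rC_def rI_def U1_def U2_def power2_eq_square)
  next
    assume "s = 4" "c = 3"
    then show ?thesis apply (simp only:) apply (rule exI[of _ "(617/1000)"], rule exI[of _ "(111/125)"], rule exI[of _ "1"]) by (simp add: Qf_def Nf_def rS_def rC_def rI_def U1_def U2_def power2_eq_square)
  next
    assume "s = 5" "c = 1"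
    then show ?thesis apply (simp only:) apply (rule exI[of _ "(649/1000)"], rule exI[of _ "1"], rule exI[of _ "1"]) by (simp add: Qf_def Nf_def rS_def rC_def rI_def U1_def U2_def power2_eq_square)
  next
    assume "s = 2" "c = 8"
    then show ?thesis apply (simp only:) apply (rule exI[of _ "(57/100)"], rule exI[of _ "(7/10)"], rule exI[of _ "1"]) by (simp add: Qf_def Nf_def rS_def rC_def rI_def U1_def U2_def power2_eq_square)
  next
    assume "s = 3" "c = 6"
    then show ?thesis apply (simp only:) apply (rule exI[of _ "(293/500)"], rule exI[of _ "(773/1000)"], rule exI[of _ "1"]) by (simp add: Qf_def Nf_def rS_def rC_def rI_def U1_def U2_def power2_eq_square)
  next
    assume "s = 4" "c = 4"
    then show ?thesis apply (simp only:) apply (rule exI[of _ "(121/200)"], rule exI[of _ "(213/250)"], rule exI[of _ "1"]) by (simp add: Qf_def Nf_def rS_def rC_def rI_def U1_def U2_def power2_eq_square)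
  next
    assume "s = 5" "c = 2"
    then show ?thesis apply (simp only:) apply (rule exI[of _ "(63/100)"], rule exI[of _ "(118/125)"], rule exI[of _ "1"]) by (simp add: Qf_def Nf_def rS_def rC_def rI_def U1_def U2_def power2_eq_square)
  next
    assume "s = 6" "c = 0"
    then show ?thesis apply (simp only:) apply (rule exI[of _ "(5/8)"], rule exI[of _ "1"], rule exI[of _ "(469/500)"]) by (simp add: Qf_def Nf_def rS_def rC_def rI_def U1_def U2_def power2_eq_square)
  next
    assume "s = 2" "c = 9"
    then show ?thesis apply (simp only:) apply (rule exI[of _ "(113/200)"], rule exI[of _ "(343/500)"], rule exI[of _ "1"]) by (simp add: Qf_def Nf_def rS_def rC_def rI_def U1_def U2_def power2_eq_square)
  next
    assume "s = 3" "c = 7"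
    then show ?thesis apply (simp only:) apply (rule exI[of _ "(579/1000)"], rule exI[of _ "(753/1000)"], rule exI[of _ "1"]) by (simp add: Qf_def Nf_def rS_def rC_def rI_def U1_def U2_def power2_eq_square)
  next
    assume "s = 4" "c = 5"
    then show ?thesis apply (simp only:) apply (rule exI[of _ "(149/250)"], rule exI[of _ "(823/1000)"], rule exI[of _ "1"]) by (simp add: Qf_def Nf_def rS_def rC_def rI_def U1_def U2_def power2_eq_square)
  next
    assume "s = 5" "c = 3"
    then show ?thesis apply (simp only:) apply (rule exI[of _ "(617/1000)"], rule exI[of _ "(451/500)"], rule exI[of _ "1"]) by (simp add: Qf_def Nf_def rS_def rC_def rI_def U1_def U2_def power2_eq_square)
  next
    assume "s = 6" "c = 1"
    then show ?thesis apply (simp only:) apply (rule exI[of _ "(161/250)"], rule exI[of _ "1"], rule exI[of _ "1"]) by (simp add: Qf_def Nf_def rS_def rC_def rI_def U1_def U2_def power2_eq_square)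
  next
    assume "s = 2" "c = 10"
    then show ?thesis apply (simp only:) apply (rule exI[of _ "(14/25)"], rule exI[of _ "(337/500)"], rule exI[of _ "1"]) by (simp add: Qf_def Nf_def rS_def rC_def rI_def U1_def U2_def power2_eq_square)
  next
    assume "s = 3" "c = 8"
    then show ?thesis apply (simp only:) apply (rule exI[of _ "(287/500)"], rule exI[of _ "(92/125)"], rule exI[of _ "1"]) by (simp add: Qf_def Nf_def rS_def rC_def rI_def U1_def U2_def power2_eq_square)
  next
    assume "s = 4" "c = 6"
    then show ?thesis apply (simp only:) apply (rule exI[of _ "(589/1000)"], rule exI[of _ "(4/5)"], rule exI[of _ "1"]) by (simp add: Qf_def Nf_def rS_def rC_def rI_def U1_def U2_def power2_eq_square)
  next
    assume "s = 5" "c = 4"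
    then show ?thesis apply (simp only:) apply (rule exI[of _ "(303/500)"], rule exI[of _ "(869/1000)"], rule exI[of _ "1"]) by (simp add: Qf_def Nf_def rS_def rC_def rI_def U1_def U2_def power2_eq_square)
  next
    assume "s = 6" "c = 2"
    then show ?thesis apply (simp only:) apply (rule exI[of _ "(157/250)"], rule exI[of _ "(951/1000)"], rule exI[of _ "1"]) by (simp add: Qf_def Nf_def rS_def rC_def rI_def U1_def U2_def power2_eq_square)
  next
    assume "s = 7" "c = 0"
    then show ?thesis apply (simp only:) apply (rule exI[of _ "(78/125)"], rule exI[of _ "1"], rule exI[of _ "(473/500)"]) by (simp add: Qf_def Nf_def rS_def rC_def rI_def U1_def U2_def power2_eq_square)
  qed
qed

lemma num2:
  assumes s: "1 \<le> s" and n: "2 * s < 2 * s + c" and p: "2 * s + c = 4 \<or> 2 * s + c = 6 \<or> 2 * s + c = 8"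
  shows "\<exists>a b d. a \<ge> 0 \<and> b \<ge> 0 \<and> d \<ge> 0 \<and> U2 (2 * s + c) * Nf s c a b d < Qf s c a b d"
proof -
  have "(s = 1 \<and> c = 2) \<or> (s = 1 \<and> c = 4) \<or> (s = 2 \<and> c = 2) \<or> (s = 1 \<and> c = 6) \<or> (s = 2 \<and> c = 4) \<or> (s = 3 \<and> c = 2)"
    using s n p by presburger
  then show ?thesis
  proof (elim disjE conjE)
    assume "s = 1" "c = 2"
    then show ?thesis apply (simp only:) apply (rule exI[of _ "(6631/10000)"], rule exI[of _ "(8591/10000)"], rule exI[of _ "1"]) by (simp add: Qf_def Nf_def rS_def rC_def rI_def U1_def U2_def power2_eq_square)
  next
    assume "s = 1" "c = 4"
    then show ?thesis apply (simp only:) apply (rule exI[of _ "(1517/2500)"], rule exI[of _ "(7397/10000)"], rule exI[of _ "1"]) by (simp add: Qf_def Nf_def rS_def rC_def rI_def U1_def U2_def power2_eq_square)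
  next
    assume "s = 2" "c = 2"
    then show ?thesis apply (simp only:) apply (rule exI[of _ "(1613/2500)"], rule exI[of _ "(2247/2500)"], rule exI[of _ "1"]) by (simp add: Qf_def Nf_def rS_def rC_def rI_def U1_def U2_def power2_eq_square)
  next
    assume "s = 1" "c = 6"
    then show ?thesis apply (simp only:) apply (rule exI[of _ "(363/625)"], rule exI[of _ "(6831/10000)"], rule exI[of _ "1"]) by (simp add: Qf_def Nf_def rS_def rC_def rI_def U1_def U2_def power2_eq_square)
  next
    assume "s = 2" "c = 4"
    then show ?thesis apply (simp only:) apply (rule exI[of _ "(3023/5000)"], rule exI[of _ "(397/500)"], rule exI[of _ "1"]) by (simp add: Qf_def Nf_def rS_def rC_def rI_def U1_def U2_def power2_eq_square)
  next
    assume "s = 3" "c = 2"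
    then show ?thesis apply (simp only:) apply (rule exI[of _ "(3187/5000)"], rule exI[of _ "(4603/5000)"], rule exI[of _ "1"]) by (simp add: Qf_def Nf_def rS_def rC_def rI_def U1_def U2_def power2_eq_square)
  qed
qed

lemma cw1_small:
  assumes "5 \<le> n" "n \<le> 14"
  shows "\<exists>a b d. a > 0 \<and> b > 0 \<and> d > 0 \<and> rS 1 (n - 2) a b d \<le> U1 n * a \<and> rI 1 (n - 2) a b d \<le> U1 n * d \<and> rC 1 (n - 2) a b d \<le> U1 n * b"
proof -
  have "n = 5 \<or> n = 6 \<or> n = 7 \<or> n = 8 \<or> n = 9 \<or> n = 10 \<or> n = 11 \<or> n = 12 \<or> n = 13 \<or> n = 14" using assms by presburger
  then show ?thesis
  proof (elim disjE)
    assume "n = 5"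
    then show ?thesis apply (simp only:) apply (rule exI[of _ "(6283/10000)"], rule exI[of _ "(393/500)"], rule exI[of _ "1"]) by (simp add: Qf_def Nf_def rS_def rC_def rI_def U1_def U2_def power2_eq_square)
  next
    assume "n = 6"
    then show ?thesis apply (simp only:) apply (rule exI[of _ "(1517/2500)"], rule exI[of _ "(7397/10000)"], rule exI[of _ "1"]) by (simp add: Qf_def Nf_def rS_def rC_def rI_def U1_def U2_def power2_eq_square)
  next
    assume "n = 7"
    then show ?thesis apply (simp only:) apply (rule exI[of _ "(5919/10000)"], rule exI[of _ "(7073/10000)"], rule exI[of _ "1"]) by (simp add: Qf_def Nf_def rS_def rC_def rI_def U1_def U2_def power2_eq_square)
  next
    assume "n = 8"
    then show ?thesis apply (simp only:) apply (rule exI[of _ "(363/625)"], rule exI[of _ "(6831/10000)"], rule exI[of _ "1"]) by (simp add: Qf_def Nf_def rS_def rC_def rI_def U1_def U2_def power2_eq_square)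
  next
    assume "n = 9"
    then show ?thesis apply (simp only:) apply (rule exI[of _ "(5723/10000)"], rule exI[of _ "(6643/10000)"], rule exI[of _ "1"]) by (simp add: Qf_def Nf_def rS_def rC_def rI_def U1_def U2_def power2_eq_square)
  next
    assume "n = 10"
    then show ?thesis apply (simp only:) apply (rule exI[of _ "(1131/2000)"], rule exI[of _ "(1623/2500)"], rule exI[of _ "1"]) by (simp add: Qf_def Nf_def rS_def rC_def rI_def U1_def U2_def power2_eq_square)
  next
    assume "n = 11"
    then show ?thesis apply (simp only:) apply (rule exI[of _ "(5599/10000)"], rule exI[of _ "(6367/10000)"], rule exI[of _ "1"]) by (simp add: Qf_def Nf_def rS_def rC_def rI_def U1_def U2_def power2_eq_square)
  next
    assume "n = 12"
    then show ?thesis apply (simp only:) apply (rule exI[of _ "(347/625)"], rule exI[of _ "(3131/5000)"], rule exI[of _ "1"]) by (simp add: Qf_def Nf_def rS_def rC_def rI_def U1_def U2_def power2_eq_square)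
  next
    assume "n = 13"
    then show ?thesis apply (simp only:) apply (rule exI[of _ "(5513/10000)"], rule exI[of _ "(6173/10000)"], rule exI[of _ "1"]) by (simp add: Qf_def Nf_def rS_def rC_def rI_def U1_def U2_def power2_eq_square)
  next
    assume "n = 14"
    then show ?thesis apply (simp only:) apply (rule exI[of _ "(2739/5000)"], rule exI[of _ "(381/625)"], rule exI[of _ "1"]) by (simp add: Qf_def Nf_def rS_def rC_def rI_def U1_def U2_def power2_eq_square)
  qed
qed

lemma cw2:
  assumes "n = 4 \<or> n = 6 \<or> n = 8"
  shows "\<exists>a b d. a > 0 \<and> b > 0 \<and> d > 0 \<and> rS (n div 2) 0 a b d \<le> U2 n * a \<and> rI (n div 2) 0 a b d \<le> U2 n * d \<and> rC (n div 2) 0 a b d \<le> U2 n * b"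
  using assms
proof (elim disjE)
    assume "n = 4"
    then show ?thesis apply (simp only:) apply (rule exI[of _ "(1601/2500)"], rule exI[of _ "60"], rule exI[of _ "(4101/5000)"]) by (simp add: Qf_def Nf_def rS_def rC_def rI_def U1_def U2_def power2_eq_square)
  next
    assume "n = 6"
    then show ?thesis apply (simp only:) apply (rule exI[of _ "(253/400)"], rule exI[of _ "120"], rule exI[of _ "(351/400)"]) by (simp add: Qf_def Nf_def rS_def rC_def rI_def U1_def U2_def power2_eq_square)
  next
    assume "n = 8"
    then show ?thesis apply (simp only:) apply (rule exI[of _ "(6287/10000)"], rule exI[of _ "200"], rule exI[of _ "(567/625)"]) by (simp add: Qf_def Nf_def rS_def rC_def rI_def U1_def U2_def power2_eq_square)
qed

lemma num1:
  assumes s: "2 \<le> s" and p: "odd (2 * s + c) \<or> 2 * s + c \<ge> 10"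
  shows "\<exists>a b d. a \<ge> 0 \<and> b \<ge> 0 \<and> d \<ge> 0 \<and> U1 (2 * s + c) * Nf s c a b d < Qf s c a b d"
proof (cases "2 * s + c \<le> 14")
  case True
  then show ?thesis using num1_small[OF s True p] by blast
next
  case False
  have h: "7 * s + 3 * c < s * s + 2 * s * c"
  proof (cases "s \<ge> 8")
    case True
    then have "8 * s \<le> s * s" by simp
    moreover have "3 * c \<le> 2 * s * c" using s by simp
    ultimately show ?thesis using s by linarith
  next
    case False
    then have "s = 2 \<or> s = 3 \<or> s = 4 \<or> s = 5 \<or> s = 6 \<or> s = 7" using s by arith
    then show ?thesis using \<open>\<not> 2 * s + c \<le> 14\<close> by auto
  qed
  then have hr: "real (7 * s + 3 * c) < real (s * s + 2 * s * c)" by (simp only: of_nat_less_iff)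
  have U: "U1 (2 * s + c) = real (2 * s + c) + 2" using False unfolding U1_def by auto
  have "Qf s c 1 1 1 - U1 (2 * s + c) * Nf s c 1 1 1 = real (s * s + 2 * s * c) - real (7 * s + 3 * c)"
    unfolding U Qf_def Nf_def rS_def rC_def rI_def by (simp add: algebra_simps)
  then show ?thesis using hr by (intro exI[of _ 1]) auto
qed

lemma cw1:
  assumes n: "3 \<le> n"
  shows "\<exists>a b d. a > 0 \<and> b > 0 \<and> d > 0 \<and> rS 1 (n - 2) a b d \<le> U1 n * a \<and> rI 1 (n - 2) a b d \<le> U1 n * d \<and> rC 1 (n - 2) a b d \<le> U1 n * b"
proof (cases "5 \<le> n \<and> n \<le> 14")
  case True
  then show ?thesis using cw1_small by blast
next
  case False
  then have U: "U1 n = real n + 2" unfolding U1_def by auto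
  have r: "real (n - 2) = real n - 2" using n by (simp add: of_nat_diff)
  show ?thesis
    by (intro exI[of _ 1] exI[of _ 2]) (simp add: U r rS_def rI_def rC_def)
qed

lemma barrier_structure:
  assumes c: "connected_graph n adj" and k: "even k" "k \<ge> 2"
    and S: "S \<noteq> {}" and bar: "k_barrier k n adj S"
  obtains I where "S \<subseteq> {..<n}" "I \<subseteq> {..<n}" "S \<inter> I = {}" "card I = card S" "card S \<ge> 1"
    "\<And>u v. adj u v \<Longrightarrow> adjH n S I u v"
proof -
  have g: "graph n adj" using c unfolding connected_graph_def by auto
  have SV: "S \<subseteq> {..<n}" using bar unfolding k_barrier_def by auto
  have fS: "finite S" using finite_subset[OF SV] by simp
  have cS1: "card S \<ge> 1" using S fS by (simp add: Suc_le_eq card_gt_0_iff)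
  have "bt_value k n adj {} \<le> def_k k n adj" unfolding def_k_def by (intro Max_ge) auto
  then have "bt_value k n adj {} \<le> bt_value k n adj S" using bar unfolding k_barrier_def by simp
  then have "int k * int (isolated_count n adj {}) \<le> int k * int (isolated_count n adj S) - int k * int (card S)"
    using k unfolding bt_value_def by simp
  then have "0 \<le> int k * (int (isolated_count n adj S) - int (card S))"
    by (simp add: right_diff_distrib) (smt (verit) mult_nonneg_nonneg of_nat_0_le_iff)
  then have ge: "card S \<le> isolated_count n adj S" using k by (simp add: zero_le_mult_iff)
  define Iso where "Iso = {v \<in> {0..<n} - S. \<forall>u \<in> {0..<n} - S. \<not> adj v u}"
  have "card S \<le> card Iso" using ge unfolding Iso_def isolated_count_def .
  then obtain I where I: "I \<subseteq> Iso" "card I = card S" by (rule obtain_subset_with_card_n) 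
  have IV: "I \<subseteq> {..<n}" "S \<inter> I = {}" using I unfolding Iso_def by auto
  have sub: "adjH n S I u v" if a: "adj u v" for u v
  proof -
    have uv: "u < n" "v < n" "u \<noteq> v" "adj v u" using g a unfolding graph_def by auto
    show ?thesis
    proof (cases "u \<in> S \<or> v \<in> S")
      case True then show ?thesis using uv unfolding adjH_def by auto
    next
      case False
      have "u \<notin> I" using False I uv a unfolding Iso_def by auto
      moreover have "v \<notin> I" using False I uv a unfolding Iso_def by auto
      ultimately show ?thesis using uv unfolding adjH_def by auto
    qed
  qed
  show ?thesis using that[OF SV IV I(2) cS1 sub] .
qed

lemma cls_intro:
  assumes "S \<subseteq> {..<n}" "I \<subseteq> {..<n}" "S \<inter> I = {}" "card S = s" "card I = s"
  shows "cls n S I s (card ({..<n} - S - I))"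
  using assms unfolding cls_def by auto

lemma Nf_nonneg: "Nf s c a b d \<ge> 0"
  unfolding Nf_def by simp

lemma part1:
  assumes c: "connected_graph n adj" and n3: "n \<ge> 3" and k: "even k" "k \<ge> 2"
    and hyp: "dist_spectral_radius n adj \<le> dist_spectral_radius n (K1_join_Kn2_K1 n)"
    and ni: "\<not> graph_iso n adj (K1_join_Kn2_K1 n)"
    and par: "odd n \<or> n \<ge> 10"
  shows "\<not> (\<exists>S. S \<noteq> {} \<and> k_barrier k n adj S)"
proof
  assume "\<exists>S. S \<noteq> {} \<and> k_barrier k n adj S"
  then obtain S where S: "S \<noteq> {}" "k_barrier k n adj S" by blast
  obtain I where I: "S \<subseteq> {..<n}" "I \<subseteq> {..<n}" "S \<inter> I = {}" "card I = card S" "card S \<ge> 1"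
    and sub: "\<And>u v. adj u v \<Longrightarrow> adjH n S I u v"
    using barrier_structure[OF c k S] by blast
  define s where "s = card S"
  define cc where "cc = card ({..<n} - S - I)"
  have H: "cls n S I s cc" unfolding s_def cc_def using I by (intro cls_intro) auto
  have neq: "n = 2 * s + cc" using cls.n_eq[OF H] .
  have K1: "K1_join_Kn2_K1 n = adjH n {0} {n-1}" using n3 by (intro K1_eq) auto
  have T: "dist_spectral_radius n (K1_join_Kn2_K1 n) = lam n (Tm (adjH n {0} {n-1}))"
    unfolding K1 using n3 by (intro dsr_target) auto
  have H0: "cls n {0} {n-1} 1 (n - 2)"
  proof -
    have "cls n {0} {n-1} 1 (card ({..<n} - {0} - {n-1}))" using n3 by (intro cls_intro) auto
    moreover have "card ({..<n} - {0} - {n-1}) = n - 2" using n3 by (subst card_rest) auto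
    ultimately show ?thesis by simp
  qed
  show False
  proof (cases "s = 1")
    case True
    obtain f where f: "bij_betw f {..<n} {..<n}" "f ` S = {0}" "f ` I = {n-1}"
      using exists_perm[of S n I "{0}" "{n-1}"] I True n3 unfolding s_def by auto
    have eqlam: "lam n (Tm (adjH n S I)) = lam n (Tm (adjH n {0} {n-1}))"
      using lam_perm_H[OF f(1) I(1) I(2) f(2) f(3)] .
    show False
    proof (cases "\<exists>u<n. \<exists>v<n. adjH n S I u v \<and> \<not> adj u v")
      case True
      have "lam n (Tm (adjH n S I)) < dist_spectral_radius n adj"
        by (rule cls.strict[OF H c sub True])
      then show False using hyp T eqlam by simp
    next
      case False
      have "graph_iso n adj (K1_join_Kn2_K1 n)"
        unfolding graph_iso_def
      proof (intro exI[of _ f] conjI allI impI)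
        show "bij_betw f {0..<n} {0..<n}" using f(1) by (simp add: atLeast0LessThan)
        fix u v assume uv: "u < n" "v < n"
        have "adj u v \<longleftrightarrow> adjH n S I u v" using sub False uv by blast
        also have "\<dots> \<longleftrightarrow> adjH n {0} {n-1} (f u) (f v)" by (rule perm_adjH[OF f(1) I(1) I(2) f(2) f(3) uv])
        finally show "adj u v \<longleftrightarrow> K1_join_Kn2_K1 n (f u) (f v)" unfolding K1 .
      qed
      then show False using ni by simp
    qed
  next
    case False
    then have s2: "s \<ge> 2" using I(5) unfolding s_def by simp
    obtain a b d where abd: "a \<ge> 0" "b \<ge> 0" "d \<ge> 0" "U1 (2 * s + cc) * Nf s cc a b d < Qf s cc a b d"
      using num1[OF s2, of cc] par neq by auto
    have lo: "Qf s cc a b d \<le> dist_spectral_radius n adj * Nf s cc a b d"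
      by (rule cls.lower[OF H c sub abd(1-3)])
    obtain a' b' d' where y: "a' > 0" "b' > 0" "d' > 0" "rS 1 (n - 2) a' b' d' \<le> U1 n * a'"
      "rI 1 (n - 2) a' b' d' \<le> U1 n * d'" "rC 1 (n - 2) a' b' d' \<le> U1 n * b'"
      using cw1[OF n3] by blast
    have "lam n (Tm (adjH n {0} {n-1})) \<le> U1 n"
      by (rule cls.cw[OF H0 _ y]) (use n3 in auto)
    then have "dist_spectral_radius n adj \<le> U1 n" using hyp T by simp
    then have "dist_spectral_radius n adj * Nf s cc a b d \<le> U1 n * Nf s cc a b d"
      using Nf_nonneg by (simp add: mult_right_mono)
    then show False using lo abd(4) neq by simp
  qed
qed

lemma part2:
  assumes c: "connected_graph n adj" and k: "even k" "k \<ge> 2"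
    and ev: "even n" and n4: "4 \<le> n" and n8: "n \<le> 8"
    and hyp: "dist_spectral_radius n adj \<le> dist_spectral_radius n (S_graph n (n div 2))"
    and nb: "\<exists>S. S \<noteq> {} \<and> k_barrier k n adj S"
  shows "graph_iso n adj (S_graph n (n div 2))"
proof -
  obtain S where S: "S \<noteq> {}" "k_barrier k n adj S" using nb by blast
  obtain I where I: "S \<subseteq> {..<n}" "I \<subseteq> {..<n}" "S \<inter> I = {}" "card I = card S" "card S \<ge> 1"
    and sub: "\<And>u v. adj u v \<Longrightarrow> adjH n S I u v"
    using barrier_structure[OF c k S] by blast
  define s where "s = card S"
  define cc where "cc = card ({..<n} - S - I)"
  have H: "cls n S I s cc" unfolding s_def cc_def using I by (intro cls_intro) auto
  have neq: "n = 2 * s + cc" using cls.n_eq[OF H] .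
  define h where "h = n div 2"
  have hn: "n = 2 * h" using ev unfolding h_def by simp
  have Sg: "S_graph n h = adjH n {..<h} {h..<n}" by (rule S_eq)
  have T: "dist_spectral_radius n (S_graph n h) = lam n (Tm (adjH n {..<h} {h..<n}))"
    unfolding Sg using n4 hn by (intro dsr_target[of _ _ 0]) auto
  have H0: "cls n {..<h} {h..<n} h 0"
  proof -
    have "cls n {..<h} {h..<n} h (card ({..<n} - {..<h} - {h..<n}))" using hn by (intro cls_intro) auto
    moreover have "{..<n} - {..<h} - {h..<n} = {}" by auto
    ultimately show ?thesis by simp
  qed
  show ?thesis
  proof (cases "s = h")
    case True
    have "\<exists>f. bij_betw f {..<n} {..<n} \<and> f ` S = {..<h} \<and> f ` I = {h..<n}"
    proof (rule exists_perm)
      show "card S = card {..<h}" using True unfolding s_def by simp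
      show "card I = card {h..<n}" using True I(4) hn unfolding s_def by simp
    qed (use I hn in auto)
    then obtain f where f: "bij_betw f {..<n} {..<n}" "f ` S = {..<h}" "f ` I = {h..<n}" by blast
    have eqlam: "lam n (Tm (adjH n S I)) = lam n (Tm (adjH n {..<h} {h..<n}))"
      using lam_perm_H[OF f(1) I(1) I(2) f(2) f(3)] .
    show ?thesis
    proof (cases "\<exists>u<n. \<exists>v<n. adjH n S I u v \<and> \<not> adj u v")
      case True
      have "lam n (Tm (adjH n S I)) < dist_spectral_radius n adj"
        by (rule cls.strict[OF H c sub True])
      then show ?thesis using hyp T eqlam unfolding h_def by simp
    next
      case False
      show "graph_iso n adj (S_graph n (n div 2))"
        unfolding graph_iso_def
      proof (intro exI[of _ f] conjI allI impI)
        show "bij_betw f {0..<n} {0..<n}" using f(1) by (simp add: atLeast0LessThan)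
        fix u v assume uv: "u < n" "v < n"
        have "adj u v \<longleftrightarrow> adjH n S I u v" using sub False uv by blast
        also have "\<dots> \<longleftrightarrow> adjH n {..<h} {h..<n} (f u) (f v)" by (rule perm_adjH[OF f(1) I(1) I(2) f(2) f(3) uv])
        finally show "adj u v \<longleftrightarrow> S_graph n (n div 2) (f u) (f v)" unfolding h_def[symmetric] Sg .
      qed
    qed
  next
    case False
    have s1: "1 \<le> s" using I(5) unfolding s_def .
    have "2 * s \<le> n" using neq by simp
    then have lt: "2 * s < 2 * s + cc" using False hn neq by simp
    have nn: "2 * s + cc = 4 \<or> 2 * s + cc = 6 \<or> 2 * s + cc = 8" using ev n4 n8 neq by presburger
    obtain a b d where abd: "a \<ge> 0" "b \<ge> 0" "d \<ge> 0" "U2 (2 * s + cc) * Nf s cc a b d < Qf s cc a b d"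
      using num2[OF s1 lt nn] by auto
    have lo: "Qf s cc a b d \<le> dist_spectral_radius n adj * Nf s cc a b d"
      by (rule cls.lower[OF H c sub abd(1-3)])
    have nn': "n = 4 \<or> n = 6 \<or> n = 8" using nn neq by simp
    obtain a' b' d' where y: "a' > 0" "b' > 0" "d' > 0" "rS (n div 2) 0 a' b' d' \<le> U2 n * a'"
      "rI (n div 2) 0 a' b' d' \<le> U2 n * d'" "rC (n div 2) 0 a' b' d' \<le> U2 n * b'"
      using cw2[OF nn'] by blast
    have "lam n (Tm (adjH n {..<h} {h..<n})) \<le> U2 n"
      by (rule cls.cw[OF H0 _ y[unfolded h_def[symmetric]]]) (use n4 in auto)
    then have "dist_spectral_radius n adj \<le> U2 n" using hyp T unfolding h_def by simp
    then have "dist_spectral_radius n adj * Nf s cc a b d \<le> U2 n * Nf s cc a b d"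
      using Nf_nonneg by (simp add: mult_right_mono)
    then show ?thesis using lo abd(4) neq by simp
  qed
qed

theorem theorem5:
  fixes k n :: nat and adj :: "nat \<Rightarrow> nat \<Rightarrow> bool"
  assumes "even k" and "k \<ge> 2"
    and "connected_graph n adj" and "n \<ge> 3"
  shows "(dist_spectral_radius n adj \<le> dist_spectral_radius n (K1_join_Kn2_K1 n) \<and>
          \<not> graph_iso n adj (K1_join_Kn2_K1 n) \<longrightarrow>
            (odd n \<longrightarrow> GFC k n adj) \<and> (even n \<and> n \<ge> 10 \<longrightarrow> GBC k n adj))
       \<and> (even n \<and> 4 \<le> n \<and> n \<le> 8 \<and>
          dist_spectral_radius n adj \<le> dist_spectral_radius n (S_graph n (n div 2)) \<longrightarrow>
            GBC k n adj \<or> graph_iso n adj (S_graph n (n div 2)))"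
proof (intro conjI impI)
  assume h: "dist_spectral_radius n adj \<le> dist_spectral_radius n (K1_join_Kn2_K1 n) \<and>
          \<not> graph_iso n adj (K1_join_Kn2_K1 n)"
  show "odd n \<Longrightarrow> GFC k n adj"
    using part1[OF assms(3,4,1,2)] h assms(3) unfolding GFC_def by blast
  show "even n \<and> n \<ge> 10 \<Longrightarrow> GBC k n adj"
    using part1[OF assms(3,4,1,2)] h assms(3) unfolding GBC_def by blast
next
  assume h: "even n \<and> 4 \<le> n \<and> n \<le> 8 \<and>
          dist_spectral_radius n adj \<le> dist_spectral_radius n (S_graph n (n div 2))"
  show "GBC k n adj \<or> graph_iso n adj (S_graph n (n div 2))"
    using part2[OF assms(3,1,2)] h assms(3) unfolding GBC_def by blast
qed

end
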